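(* Let $n\ge 1$, $w\in S_n$, and let $D^w$ be its rank matrix. Extend it by $D^w_{0,q}=D^w_{p,0}=0$ for all $p,q$. Call a position $(p,q)\in\{1,\dots,n\}^2$ non-redundant if $D^w_{p,q}\neq D^w_{p-1,q}$ and $D^w_{p,q}\neq D^w_{p,q-1}$. Then the number of non-redundant positions $(p,q)$ with $1\le D^w_{p,q}\le n-1$ equals $l(w)+n-1$.
   Context: $S_n$ is the symmetric group and $l(w)$ is the number of inversions of $w$, i.e. $\#\{(i,j): i<j,\ w(i)>w(j)\}$. The rank matrix of $w$ is the $n\times n$ integer matrix $D^w$ with $D^w_{p,q}=\#\{i\in\{1,\dots,n\}: i\le p,\ w(i)\le q\}$. Interpretation: in the product $\prod_{p,q}\mathrm{Gr}_{D^w_{p,q}}(E)$ carrying inclusions $\ell_{p,q}\subset\ell_{p,q+1}$ and $\ell_{p,q}\subset\ell_{p+1,q}$, a factor is redundant exactly when its dimension equals that of its left or upper neighbour. The non-redundant positions with $1\le D^w_{p,q}\le n-1$ are therefore the copies of Grassmannians $\mathrm{Gr}_i$, $1\le i\le n-1$, that remain after eliminating this redundancy. *)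

theory Defs
  imports "HOL-Combinatorics.Permutations"
begin

text \<open>Permutations of \<open>{1..n}\<close> are functions \<open>w :: nat \<Rightarrow> nat\<close> with \<open>w permutes {1..n}\<close>.\<close>

definition inversions :: "nat \<Rightarrow> (nat \<Rightarrow> nat) \<Rightarrow> nat" where
  "inversions n w = card {(i, j). i \<in> {1..n} \<and> j \<in> {1..n} \<and> i < j \<and> w i > w j}"

text \<open>Rank matrix, extended by zero for \<open>p = 0\<close> or \<open>q = 0\<close> (automatic from the formula).\<close>
definition rank_matrix :: "nat \<Rightarrow> (nat \<Rightarrow> nat) \<Rightarrow> nat \<Rightarrow> nat \<Rightarrow> nat" where
  "rank_matrix n w p q = card {i \<in> {1..n}. i \<le> p \<and> w i \<le> q}"

definition non_redundant :: "nat \<Rightarrow> (nat \<Rightarrow> nat) \<Rightarrow> nat \<Rightarrow> nat \<Rightarrow> bool" where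
  "non_redundant n w p q \<longleftrightarrow>
     rank_matrix n w p q \<noteq> rank_matrix n w (p - 1) q \<and>
     rank_matrix n w p q \<noteq> rank_matrix n w p (q - 1)"

end

theory Submission
  imports Defs
begin

lemma card_ne_sub: "finite B \<Longrightarrow> A \<subseteq> B \<Longrightarrow> (card A \<noteq> card B) \<longleftrightarrow> A \<noteq> B"
  using card_subset_eq by metis

lemma perm_facts:
  assumes "w permutes {1..(n::nat)}"
  shows "\<And>x. x \<in> {1..n} \<Longrightarrow> w x \<in> {1..n}"
    and "\<And>x. x \<in> {1..n} \<Longrightarrow> inv w x \<in> {1..n}"
    and "\<And>x. w (inv w x) = x" and "\<And>x. inv w (w x) = x"
    and "\<And>x y. w x = w y \<longleftrightarrow> x = y"
proof -
  show "\<And>x. x \<in> {1..n} \<Longrightarrow> w x \<in> {1..n}" using assms permutes_in_image by metis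
  show "\<And>x. x \<in> {1..n} \<Longrightarrow> inv w x \<in> {1..n}" using assms permutes_in_image permutes_inv by metis
  show "\<And>x. w (inv w x) = x" using assms permutes_inverses(1) by metis
  show "\<And>x. inv w (w x) = x" using assms permutes_inverses(2) by metis
  show "\<And>x y. w x = w y \<longleftrightarrow> x = y" using assms permutes_inj injD by metis
qed

lemma nr_iff:
  assumes w: "w permutes {1..n}" and p: "p \<in> {1..n}" and q: "q \<in> {1..n}"
  shows "non_redundant n w p q \<longleftrightarrow> w p \<le> q \<and> inv w q \<le> p"
proof -
  note pf = perm_facts[OF w]
  define R where "R = (\<lambda>p q. {i \<in> {1..n}. i \<le> p \<and> w i \<le> q})"
  have RD: "rank_matrix n w a b = card (R a b)" for a b by (simp add: rank_matrix_def R_def)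
  have fin: "finite (R a b)" for a b by (simp add: R_def)
  have s1: "R (p-1) q \<subseteq> R p q" "R p (q-1) \<subseteq> R p q" by (auto simp: R_def)
  have e1: "R p q \<noteq> R (p-1) q \<longleftrightarrow> w p \<le> q"
  proof
    assume "R p q \<noteq> R (p-1) q"
    then obtain i where "i \<in> R p q" "i \<notin> R (p-1) q" using s1(1) by blast
    then have "i \<le> p" "\<not> i \<le> p - 1" "w i \<le> q" by (auto simp: R_def)
    then have "i = p" by linarith
    then show "w p \<le> q" using \<open>w i \<le> q\<close> by simp
  next
    assume "w p \<le> q"
    then have "p \<in> R p q" "p \<notin> R (p-1) q" using p by (auto simp: R_def)
    then show "R p q \<noteq> R (p-1) q" by blast
  qed
  have e2: "R p q \<noteq> R p (q-1) \<longleftrightarrow> inv w q \<le> p"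
  proof
    assume "R p q \<noteq> R p (q-1)"
    then obtain i where "i \<in> R p q" "i \<notin> R p (q-1)" using s1(2) by blast
    then have "i \<in> {1..n}" "i \<le> p" "w i = q" by (auto simp: R_def)
    then show "inv w q \<le> p" using pf by metis
  next
    assume "inv w q \<le> p"
    then have "inv w q \<in> R p q" "inv w q \<notin> R p (q-1)" using pf q by (auto simp: R_def)
    then show "R p q \<noteq> R p (q-1)" by blast
  qed
  have c1: "card (R p q) \<noteq> card (R (p-1) q) \<longleftrightarrow> w p \<le> q"
    using card_ne_sub[OF fin s1(1)] e1 by (metis eq_commute)
  have c2: "card (R p q) \<noteq> card (R p (q-1)) \<longleftrightarrow> inv w q \<le> p"
    using card_ne_sub[OF fin s1(2)] e2 by (metis eq_commute)
  show ?thesis unfolding non_redundant_def RD using c1 c2 by simp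
qed

lemma rank_ge1:
  assumes "p \<in> {1..n}" "w p \<le> q"
  shows "1 \<le> rank_matrix n w p q"
proof -
  have "p \<in> {i \<in> {1..n}. i \<le> p \<and> w i \<le> q}" using assms by auto
  then have "card {i \<in> {1..n}. i \<le> p \<and> w i \<le> q} \<noteq> 0" by (auto simp: card_eq_0_iff)
  then show ?thesis unfolding rank_matrix_def by linarith
qed

lemma rank_le:
  assumes w: "w permutes {1..n}" and p: "p \<in> {1..n}" and q: "q \<in> {1..n}"
  shows "rank_matrix n w p q \<le> n - 1 \<longleftrightarrow> (p, q) \<noteq> (n, n)"
proof -
  note pf = perm_facts[OF w]
  define R where "R = {i \<in> {1..n}. i \<le> p \<and> w i \<le> q}"
  have RD: "rank_matrix n w p q = card R" by (simp add: rank_matrix_def R_def)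
  have sub: "R \<subseteq> {1..n}" by (auto simp: R_def)
  show ?thesis
  proof
    assume h: "rank_matrix n w p q \<le> n - 1"
    show "(p, q) \<noteq> (n, n)"
    proof
      assume "(p, q) = (n, n)"
      then have "R = {1..n}" using pf(1) by (auto simp: R_def)
      then show False using h p RD by simp
    qed
  next
    assume "(p, q) \<noteq> (n, n)"
    then have "p < n \<or> q < n" using p q by auto
    then obtain x where x: "x \<in> {1..n}" "x \<notin> R"
    proof
      assume "p < n" then show thesis using that[of n] p by (auto simp: R_def)
    next
      assume "q < n" then show thesis using that[of "inv w n"] pf(2)[of n] pf(3)[of n] p
        by (auto simp: R_def)
    qed
    then have "R \<subseteq> {1..n} - {x}" using sub by auto
    then have "card R \<le> card ({1..n} - {x})" by (intro card_mono) auto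
    also have "\<dots> = n - 1" using x by simp
    finally show "rank_matrix n w p q \<le> n - 1" using RD by simp
  qed
qed

theorem proposition2p4:
  fixes n :: nat and w :: "nat \<Rightarrow> nat"
  assumes "n \<ge> 1" and "w permutes {1..n}"
  shows "card {(p, q). p \<in> {1..n} \<and> q \<in> {1..n} \<and> non_redundant n w p q \<and>
                1 \<le> rank_matrix n w p q \<and> rank_matrix n w p q \<le> n - 1}
         = inversions n w + n - 1"
proof -
  note pf = perm_facts[OF assms(2)]
  define S where "S = {(p, q). p \<in> {1..n} \<and> q \<in> {1..n} \<and> non_redundant n w p q \<and>
                1 \<le> rank_matrix n w p q \<and> rank_matrix n w p q \<le> n - 1}"
  define T where "T = {(p, q). p \<in> {1..n} \<and> q \<in> {1..n} \<and> w p \<le> q \<and> inv w q \<le> p}"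
  define U where "U = {(p, j). p \<in> {1..n} \<and> j \<in> {1..n} \<and> j \<le> p \<and> w p \<le> w j}"
  define I where "I = {(i, j). i \<in> {1..n} \<and> j \<in> {1..n} \<and> i < j \<and> w i > w j}"
  have ST: "S = T - {(n, n)}"
  proof (rule set_eqI)
    fix x show "x \<in> S \<longleftrightarrow> x \<in> T - {(n, n)}"
    proof (cases x)
      case (Pair p q)
      show ?thesis
      proof (cases "p \<in> {1..n} \<and> q \<in> {1..n}")
        case True
        then show ?thesis unfolding Pair S_def T_def
          using nr_iff[OF assms(2), of p q] rank_le[OF assms(2), of p q] rank_ge1[of p n w q]
          by auto
      qed (auto simp: S_def T_def Pair)
    qed
  qed
  have nnT: "(n, n) \<in> T" using assms(1) pf(1)[of n] pf(2)[of n] by (auto simp: T_def)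
  have finT: "finite T" by (rule finite_subset[of _ "{1..n} \<times> {1..n}"]) (auto simp: T_def)
  have cS: "card S = card T - 1" using ST nnT finT by simp
  have TU: "T = (\<lambda>(p, j). (p, w j)) ` U"
  proof (rule set_eqI)
    fix x show "x \<in> T \<longleftrightarrow> x \<in> (\<lambda>(p, j). (p, w j)) ` U"
    proof
      assume "x \<in> T"
      then obtain p q where x: "x = (p, q)" "p \<in> {1..n}" "q \<in> {1..n}" "w p \<le> q" "inv w q \<le> p"
        by (auto simp: T_def)
      then have "(p, inv w q) \<in> U" using pf(2,3) by (auto simp: U_def)
      moreover have "x = (\<lambda>(p, j). (p, w j)) (p, inv w q)" using x pf(3) by simp
      ultimately show "x \<in> (\<lambda>(p, j). (p, w j)) ` U" by blast
    next
      assume "x \<in> (\<lambda>(p, j). (p, w j)) ` U"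
      then show "x \<in> T" using pf(1,4) by (auto simp: U_def T_def)
    qed
  qed
  have inj: "inj_on (\<lambda>(p, j). (p, w j)) U" using pf(5) by (auto simp: inj_on_def)
  have cT: "card T = card U" using TU inj card_image by metis
  have UD: "U = (\<lambda>p. (p, p)) ` {1..n} \<union> prod.swap ` I"
  proof (rule set_eqI)
    fix x show "x \<in> U \<longleftrightarrow> x \<in> (\<lambda>p. (p, p)) ` {1..n} \<union> prod.swap ` I"
    proof
      assume "x \<in> U"
      then obtain p j where x: "x = (p, j)" "p \<in> {1..n}" "j \<in> {1..n}" "j \<le> p" "w p \<le> w j"
        by (auto simp: U_def)
      show "x \<in> (\<lambda>p. (p, p)) ` {1..n} \<union> prod.swap ` I"
      proof (cases "j = p")
        case True then show ?thesis using x by auto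
      next
        case False
        then have "w p \<noteq> w j" using pf(5) by metis
        then have "(j, p) \<in> I" using x False by (auto simp: I_def)
        then have "(p, j) \<in> prod.swap ` I" by (metis image_eqI swap_simp)
        then show ?thesis using x by blast
      qed
    next
      assume "x \<in> (\<lambda>p. (p, p)) ` {1..n} \<union> prod.swap ` I"
      then show "x \<in> U" by (auto simp: U_def I_def)
    qed
  qed
  have finI: "finite I" by (rule finite_subset[of _ "{1..n} \<times> {1..n}"]) (auto simp: I_def)
  have disj: "(\<lambda>p. (p, p)) ` {1..n} \<inter> prod.swap ` I = {}" by (auto simp: I_def)
  have "card U = card ((\<lambda>p. (p, p)) ` {1..n}) + card (prod.swap ` I)"
    unfolding UD using finI disj by (intro card_Un_disjoint) auto
  also have "card ((\<lambda>p. (p, p)) ` {1..n}) = n" by (subst card_image) (auto simp: inj_on_def)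
  also have "card (prod.swap ` I) = card I" by (simp add: card_image)
  also have "card I = inversions n w" by (simp add: I_def inversions_def)
  finally have "card U = n + inversions n w" .
  then show ?thesis using cS cT S_def assms(1) by simp
qed

end
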